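(* (i) The sequence $D_{2,1}=0$, $D_{2,m}=A_{2,m}-A_{2,m-1}$ ($m\geq2$) satisfies, for $m\geq 2$, $$D_{2,m}=\frac{m(2m-1)(2m+\lambda)}{(m-1+\lambda)(2m-2+\lambda)(2m-1+2\lambda)}D_{2,m-1}+\frac{2(m-1)m^2(m-1+\lambda)(m+\lambda)(2m-1+\lambda)(2m+\lambda)}{(2\lambda+1)(2m-1+2\lambda)},$$ and the solution of this recurrence with $D_{2,1}=0$ is $$D_{2,m}=\frac{2(m-1)m(m+\lambda)(m+\lambda+1)(2m+\lambda)\big[m^2+\lambda m-\frac{2}{2\lambda+3}\big]}{(2\lambda+1)(2\lambda+5)}.$$ (ii) The sequence $\widetilde D_{2,1}=0$, $\widetilde D_{2,m}=\widetilde A_{2,m}-\widetilde A_{2,m-1}$ ($m\geq2$) satisfies, for $m\geq2$, $$\widetilde D_{2,m}=\frac{(m-1)(2m-1)(2m-1+\lambda)}{(m-1+\lambda)(2m-3+\lambda)(2m-3+2\lambda)}\widetilde D_{2,m-1}+\frac{(m-1)(2m-1)(2m-2+\lambda)(2m-1+\lambda)\big[m^2+(\lambda-2)m-\lambda+\frac12\big]}{2(2\lambda+1)},$$ and the solution of this recurrence with $\widetilde D_{2,1}=0$ is $$\widetilde D_{2,m}=\frac{(m-1)(2m-1)(m+\lambda)(2m-1+\lambda)(2m-1+2\lambda)\big[m^2+(\lambda-1)m-\frac{2\lambda+1}{2}-\frac{2}{2\lambda+3}\big]}{2(2\lambda+1)(2\lambda+5)}.$$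
   Context: Fix $\lambda>-1/2$. Define polynomials $Q_m$ by $Q_0=1$, $Q_1(\mu)=1-\frac{2(\lambda+1)(\lambda+2)}{2\lambda+1}\mu$ and, for $m\geq2$, $$Q_m-Q_{m-1}=\frac{m(2m-1)(2m+\lambda)}{(m-1+\lambda)(2m-2+\lambda)(2m-1+2\lambda)}\big[Q_{m-1}-Q_{m-2}\big]-\frac{2m(2m-1+\lambda)(2m+\lambda)}{2m-1+2\lambda}\,\mu\,Q_{m-1}(\mu).$$ Define $\widetilde Q_m$ by $\widetilde Q_0=1$, $\widetilde Q_1(\mu)=1-\frac{\lambda+1}{2}\mu$ and, for $m\geq2$, $$\widetilde Q_m-\widetilde Q_{m-1}=\frac{(m-1)(2m-1)(2m-1+\lambda)}{(m-1+\lambda)(2m-3+\lambda)(2m-3+2\lambda)}\big[\widetilde Q_{m-1}-\widetilde Q_{m-2}\big]-\frac{(2m-1)(2m-2+\lambda)(2m-1+\lambda)}{2(m-1+\lambda)}\,\mu\,\widetilde Q_{m-1}(\mu).$$ Write $Q_m(\mu)=\sum_{i=0}^m(-1)^iA_{i,m}\mu^i$ and $\widetilde Q_m(\mu)=\sum_{i=0}^m(-1)^i\widetilde A_{i,m}\mu^i$, with $A_{i,m}=\widetilde A_{i,m}=0$ for $i>m$. *)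

theory Defs
  imports Complex_Main "HOL-Computational_Algebra.Polynomial"
begin

text \<open>Q l m is the polynomial Q_m in the variable mu, for parameter lambda = l.
  The clause for Suc (Suc n) is the recurrence with m = n + 2.\<close>

fun Q :: "real \<Rightarrow> nat \<Rightarrow> real poly" where
  "Q l 0 = 1"
| "Q l (Suc 0) = [:1, - (2 * (l + 1) * (l + 2) / (2 * l + 1)):]"
| "Q l (Suc (Suc n)) =
     (let m = real (Suc (Suc n)) in
      Q l (Suc n)
      + smult (m * (2*m - 1) * (2*m + l) / ((m - 1 + l) * (2*m - 2 + l) * (2*m - 1 + 2*l)))
              (Q l (Suc n) - Q l n)
      - smult (2 * m * (2*m - 1 + l) * (2*m + l) / (2*m - 1 + 2*l)) ([:0, 1:] * Q l (Suc n)))"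

fun Qt :: "real \<Rightarrow> nat \<Rightarrow> real poly" where
  "Qt l 0 = 1"
| "Qt l (Suc 0) = [:1, - ((l + 1) / 2):]"
| "Qt l (Suc (Suc n)) =
     (let m = real (Suc (Suc n)) in
      Qt l (Suc n)
      + smult ((m - 1) * (2*m - 1) * (2*m - 1 + l) / ((m - 1 + l) * (2*m - 3 + l) * (2*m - 3 + 2*l)))
              (Qt l (Suc n) - Qt l n)
      - smult ((2*m - 1) * (2*m - 2 + l) * (2*m - 1 + l) / (2 * (m - 1 + l))) ([:0, 1:] * Qt l (Suc n)))"

text \<open>Q_m(mu) = sum_i (-1)^i A_{i,m} mu^i; coeff is 0 beyond the degree.\<close>
definition A :: "real \<Rightarrow> nat \<Rightarrow> nat \<Rightarrow> real" where
  "A l i m = (-1) ^ i * coeff (Q l m) i"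

definition At :: "real \<Rightarrow> nat \<Rightarrow> nat \<Rightarrow> real" where
  "At l i m = (-1) ^ i * coeff (Qt l m) i"

definition D2 :: "real \<Rightarrow> nat \<Rightarrow> real" where
  "D2 l m = (if m \<le> 1 then 0 else A l 2 m - A l 2 (m - 1))"

definition Dt2 :: "real \<Rightarrow> nat \<Rightarrow> real" where
  "Dt2 l m = (if m \<le> 1 then 0 else At l 2 m - At l 2 (m - 1))"

end

theory Submission
  imports Defs
begin

definition R :: "real \<Rightarrow> real \<Rightarrow> real" where
 "R l y = y*(2*y-1)*(2*y+l)/((y-1+l)*(2*y-2+l)*(2*y-1+2*l))"
definition S :: "real \<Rightarrow> real \<Rightarrow> real" where
 "S l y = 2*y*(2*y-1+l)*(2*y+l)/(2*y-1+2*l)"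
definition Rt :: "real \<Rightarrow> real \<Rightarrow> real" where
 "Rt l y = (y-1)*(2*y-1)*(2*y-1+l)/((y-1+l)*(2*y-3+l)*(2*y-3+2*l))"
definition St :: "real \<Rightarrow> real \<Rightarrow> real" where
 "St l y = (2*y-1)*(2*y-2+l)*(2*y-1+l)/(2*(y-1+l))"

definition C1f :: "real \<Rightarrow> real \<Rightarrow> real" where
 "C1f l y = -(y*(y+1)*(y+l)*(y+1+l)/(2*l+1))"
definition Ct1f :: "real \<Rightarrow> real \<Rightarrow> real" where
 "Ct1f l y = -(y*(y+l)*((y+1)^2+(l-2)*(y+1)-l+1/2)/(2*l+1))"
definition Ff :: "real \<Rightarrow> real \<Rightarrow> real" where
 "Ff l y = 2 * (y - 1) * y * (y + l) * (y + l + 1) * (2 * y + l)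
                 * (y ^ 2 + l * y - 2 / (2 * l + 3)) / ((2 * l + 1) * (2 * l + 5))"
definition Ftf :: "real \<Rightarrow> real \<Rightarrow> real" where
 "Ftf l y = (y - 1) * (2 * y - 1) * (y + l) * (2 * y - 1 + l) * (2 * y - 1 + 2 * l)
                 * (y ^ 2 + (l - 1) * y - (2 * l + 1) / 2 - 2 / (2 * l + 3))
                 / (2 * (2 * l + 1) * (2 * l + 5))"

lemma Q0: "coeff (Q l n) 0 = 1 \<and> coeff (Q l (Suc n)) 0 = 1"
  by (induction n) (auto simp: Let_def)

lemma nz: fixes l y :: real assumes "l > -1/2" "y \<ge> 2"
  shows "2*l+1 \<noteq> 0" "2*l+3 \<noteq> 0" "2*l+5 \<noteq> 0" "y-1+l \<noteq> 0" "2*y-2+l \<noteq> 0" "2*y-1+2*l \<noteq> 0"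
   "2*y-3+l \<noteq> 0" "2*y-3+2*l \<noteq> 0"
  using assms by auto

lemma invs:
  fixes l y :: real assumes "l > -1/2" "y \<ge> 2"
  shows "inverse (2*l+1) * (2*l+1) = 1" "inverse (2*l+3) * (2*l+3) = 1" "inverse (2*l+5) * (2*l+5) = 1"
   "inverse (y-1+l) * (y-1+l) = 1" "inverse (2*y-2+l) * (2*y-2+l) = 1" "inverse (2*y-1+2*l) * (2*y-1+2*l) = 1"
   "inverse (2*y-3+l) * (2*y-3+l) = 1" "inverse (2*y-3+2*l) * (2*y-3+2*l) = 1" "inverse (2::real) * 2 = 1"
  using assms by auto

lemma IC1: assumes "l > -1/2" "y \<ge> 2"
  shows "C1f l (y-1) + R l y * (C1f l (y-1) - C1f l (y-1-1)) - S l y * 1 = C1f l y"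
  using invs[OF assms] unfolding C1f_def R_def S_def divide_inverse inverse_mult_distrib by algebra

lemma ICt1: assumes "l > -1/2" "y \<ge> 2"
  shows "Ct1f l (y-1) + Rt l y * (Ct1f l (y-1) - Ct1f l (y-1-1)) - St l y * 1 = Ct1f l y"
  using nz[OF assms] unfolding Ct1f_def Rt_def St_def
  apply (simp add: divide_simps)
  apply algebra
  done

lemma IF: assumes "l > -1/2" "y \<ge> 2"
  shows "R l y * Ff l (y-1) - S l y * C1f l (y-1) = Ff l y"
  using nz[OF assms] unfolding Ff_def C1f_def R_def S_def
  apply (simp add: divide_simps)
  apply algebra
  done

lemma IFt: assumes "l > -1/2" "y \<ge> 2"
  shows "Rt l y * Ftf l (y-1) - St l y * Ct1f l (y-1) = Ftf l y"
  using nz[OF assms] unfolding Ftf_def Ct1f_def Rt_def St_def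
  apply (simp add: divide_simps)
  apply algebra
  done

lemma IR: assumes "l > -1/2" "y \<ge> 2"
  shows "R l y * d - S l y * C1f l (y-1) = y * (2 * y - 1) * (2 * y + l)
                 / ((y - 1 + l) * (2 * y - 2 + l) * (2 * y - 1 + 2 * l)) * d
              + 2 * (y - 1) * y ^ 2 * (y - 1 + l) * (y + l) * (2 * y - 1 + l)
                 * (2 * y + l) / ((2 * l + 1) * (2 * y - 1 + 2 * l))"
  unfolding C1f_def R_def S_def divide_inverse inverse_mult_distrib by (simp add: algebra_simps power2_eq_square)

lemma IRt0: assumes "l > -1/2" "y \<ge> 2"
  shows "St l y * Ct1f l (y-1) = - ((y - 1) * (2 * y - 1) * (2 * y - 2 + l) * (2 * y - 1 + l)
                 * (y ^ 2 + (l - 2) * y - l + 1 / 2) / (2 * (2 * l + 1)))"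
proof -
  define a where "a = y - 1 + l"
  define K where "K = (2*y-1)*(2*y-2+l)*(2*y-1+l) / 2"
  define M where "M = (y-1)*(y ^ 2 + (l - 2) * y - l + 1 / 2)/(2*l+1)"
  have a: "a \<noteq> 0" using assms unfolding a_def by auto
  have 1: "St l y = K / a" unfolding St_def K_def a_def by simp
  have 2: "Ct1f l (y-1) = - (M * a)" unfolding Ct1f_def M_def a_def by (simp add: power2_eq_square field_simps)
  have "St l y * Ct1f l (y-1) = - (K * M)" unfolding 1 2 using a by simp
  then show ?thesis unfolding K_def M_def by simp
qed

lemma IRt: assumes "l > -1/2" "y \<ge> 2"
  shows "Rt l y * d - St l y * Ct1f l (y-1) = (y - 1) * (2 * y - 1) * (2 * y - 1 + l)
                 / ((y - 1 + l) * (2 * y - 3 + l) * (2 * y - 3 + 2 * l)) * d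
              + (y - 1) * (2 * y - 1) * (2 * y - 2 + l) * (2 * y - 1 + l)
                 * (y ^ 2 + (l - 2) * y - l + 1 / 2) / (2 * (2 * l + 1))"
  unfolding IRt0[OF assms] by (simp add: Rt_def)
lemma Qstep: "coeff (Q l (Suc (Suc n))) i = coeff (Q l (Suc n)) i
   + R l (real (Suc (Suc n))) * (coeff (Q l (Suc n)) i - coeff (Q l n) i)
   - S l (real (Suc (Suc n))) * (if i = 0 then 0 else coeff (Q l (Suc n)) (i - 1))"
  by (cases i) (simp_all only: Q.simps Let_def, simp_all add: R_def S_def mult_pCons_left)

lemma Qtstep: "coeff (Qt l (Suc (Suc n))) i = coeff (Qt l (Suc n)) i
   + Rt l (real (Suc (Suc n))) * (coeff (Qt l (Suc n)) i - coeff (Qt l n) i)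
   - St l (real (Suc (Suc n))) * (if i = 0 then 0 else coeff (Qt l (Suc n)) (i - 1))"
  by (cases i) (simp_all only: Qt.simps Let_def, simp_all add: Rt_def St_def mult_pCons_left)


lemma LC1: assumes hl: "l > -1/2"
  shows "coeff (Q l n) 1 = C1f l (real n) \<and> coeff (Q l (Suc n)) 1 = C1f l (real (Suc n))"
proof (induction n)
  case 0
  have "2*l+1 \<noteq> 0" using hl by auto
  then show ?case by (simp add: C1f_def field_simps)
next
  case (Suc n)
  define y where "y = real (Suc (Suc n))"
  have y2: "y \<ge> 2" unfolding y_def by simp
  have e: "real (Suc n) = y - 1" "real n = y - 1 - 1" unfolding y_def by simp_all
  have "coeff (Q l (Suc (Suc n))) 1 = coeff (Q l (Suc n)) 1 + R l y * (coeff (Q l (Suc n)) 1 - coeff (Q l n) 1) - S l y * 1"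
    using Qstep[of l n 1] Q0[of l n] unfolding y_def by simp
  also have "\<dots> = C1f l y" using Suc.IH IC1[OF hl y2] unfolding e by simp
  finally show ?case using Suc.IH unfolding y_def by simp
qed

lemma Qt1: "coeff (Qt l n) 0 = 1 \<and> coeff (Qt l (Suc n)) 0 = 1"
  by (induction n) (auto simp: Let_def)

lemma LCt1: assumes hl: "l > -1/2"
  shows "coeff (Qt l n) 1 = Ct1f l (real n) \<and> coeff (Qt l (Suc n)) 1 = Ct1f l (real (Suc n))"
proof (induction n)
  case 0
  have "2*l+1 \<noteq> 0" using hl by auto
  then show ?case by (simp add: Ct1f_def field_simps)
next
  case (Suc n)
  define y where "y = real (Suc (Suc n))"
  have y2: "y \<ge> 2" unfolding y_def by simp
  have e: "real (Suc n) = y - 1" "real n = y - 1 - 1" unfolding y_def by simp_all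
  have "coeff (Qt l (Suc (Suc n))) 1 = coeff (Qt l (Suc n)) 1 + Rt l y * (coeff (Qt l (Suc n)) 1 - coeff (Qt l n) 1) - St l y * 1"
    using Qtstep[of l n 1] Qt1[of l n] unfolding y_def by simp
  also have "\<dots> = Ct1f l y" using Suc.IH ICt1[OF hl y2] unfolding e by simp
  finally show ?case using Suc.IH unfolding y_def by simp
qed

lemma D2diff: "D2 l (Suc n) = coeff (Q l (Suc n)) 2 - coeff (Q l n) 2"
  by (cases n) (simp_all add: D2_def A_def numeral_2_eq_2)

lemma Dt2diff: "Dt2 l (Suc n) = coeff (Qt l (Suc n)) 2 - coeff (Qt l n) 2"
  by (cases n) (simp_all add: Dt2_def At_def numeral_2_eq_2)

lemma LRec: assumes hl: "l > -1/2"
  shows "D2 l (Suc (Suc n)) = R l (real (Suc (Suc n))) * D2 l (Suc n) - S l (real (Suc (Suc n))) * C1f l (real (Suc (Suc n)) - 1)"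
proof -
  have e: "real (Suc (Suc n)) - 1 = real (Suc n)" by simp
  have "D2 l (Suc (Suc n)) = coeff (Q l (Suc (Suc n))) 2 - coeff (Q l (Suc n)) 2" by (rule D2diff)
  also have "\<dots> = R l (real (Suc (Suc n))) * (coeff (Q l (Suc n)) 2 - coeff (Q l n) 2) - S l (real (Suc (Suc n))) * coeff (Q l (Suc n)) 1"
    using Qstep[of l n 2] by simp
  finally show ?thesis unfolding e D2diff using LC1[OF hl, of n] by simp
qed

lemma LRect: assumes hl: "l > -1/2"
  shows "Dt2 l (Suc (Suc n)) = Rt l (real (Suc (Suc n))) * Dt2 l (Suc n) - St l (real (Suc (Suc n))) * Ct1f l (real (Suc (Suc n)) - 1)"
proof -
  have e: "real (Suc (Suc n)) - 1 = real (Suc n)" by simp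
  have "Dt2 l (Suc (Suc n)) = coeff (Qt l (Suc (Suc n))) 2 - coeff (Qt l (Suc n)) 2" by (rule Dt2diff)
  also have "\<dots> = Rt l (real (Suc (Suc n))) * (coeff (Qt l (Suc n)) 2 - coeff (Qt l n) 2) - St l (real (Suc (Suc n))) * coeff (Qt l (Suc n)) 1"
    using Qtstep[of l n 2] by simp
  finally show ?thesis unfolding e Dt2diff using LCt1[OF hl, of n] by simp
qed

lemma LD2: assumes hl: "l > -1/2" shows "D2 l (Suc n) = Ff l (real (Suc n))"
proof (induction n)
  case 0 then show ?case by (simp add: D2_def Ff_def)
next
  case (Suc n)
  have y2: "real (Suc (Suc n)) \<ge> 2" by simp
  have e: "real (Suc n) = real (Suc (Suc n)) - 1" by simp
  show ?case unfolding LRec[OF hl] Suc.IH e using IF[OF hl y2] by simp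
qed

lemma LDt2: assumes hl: "l > -1/2" shows "Dt2 l (Suc n) = Ftf l (real (Suc n))"
proof (induction n)
  case 0 then show ?case by (simp add: Dt2_def Ftf_def)
next
  case (Suc n)
  have y2: "real (Suc (Suc n)) \<ge> 2" by simp
  have e: "real (Suc n) = real (Suc (Suc n)) - 1" by simp
  show ?case unfolding LRect[OF hl] Suc.IH e using IFt[OF hl y2] by simp
qed

theorem lemma3p3:
  fixes l :: real
  assumes hl: "l > - 1 / 2"
  shows
   "(\<forall>m::nat. m \<ge> 2 \<longrightarrow>
       D2 l m = real m * (2 * real m - 1) * (2 * real m + l)
                 / ((real m - 1 + l) * (2 * real m - 2 + l) * (2 * real m - 1 + 2 * l)) * D2 l (m - 1)
              + 2 * (real m - 1) * real m ^ 2 * (real m - 1 + l) * (real m + l) * (2 * real m - 1 + l)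
                 * (2 * real m + l) / ((2 * l + 1) * (2 * real m - 1 + 2 * l)))
  \<and> (\<forall>m::nat. m \<ge> 1 \<longrightarrow>
       D2 l m = 2 * (real m - 1) * real m * (real m + l) * (real m + l + 1) * (2 * real m + l)
                 * (real m ^ 2 + l * real m - 2 / (2 * l + 3)) / ((2 * l + 1) * (2 * l + 5)))
  \<and> (\<forall>m::nat. m \<ge> 2 \<longrightarrow>
       Dt2 l m = (real m - 1) * (2 * real m - 1) * (2 * real m - 1 + l)
                 / ((real m - 1 + l) * (2 * real m - 3 + l) * (2 * real m - 3 + 2 * l)) * Dt2 l (m - 1)
              + (real m - 1) * (2 * real m - 1) * (2 * real m - 2 + l) * (2 * real m - 1 + l)
                 * (real m ^ 2 + (l - 2) * real m - l + 1 / 2) / (2 * (2 * l + 1)))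
  \<and> (\<forall>m::nat. m \<ge> 1 \<longrightarrow>
       Dt2 l m = (real m - 1) * (2 * real m - 1) * (real m + l) * (2 * real m - 1 + l) * (2 * real m - 1 + 2 * l)
                 * (real m ^ 2 + (l - 1) * real m - (2 * l + 1) / 2 - 2 / (2 * l + 3))
                 / (2 * (2 * l + 1) * (2 * l + 5)))"
proof (intro conjI allI impI)
  fix m :: nat assume m: "m \<ge> 2"
  then obtain n where mn: "m = Suc (Suc n)" by (metis add_2_eq_Suc le_Suc_ex)
  have y2: "real m \<ge> 2" using m by simp
  have e: "m - 1 = Suc n" using mn by simp
  have "D2 l m = R l (real m) * D2 l (m - 1) - S l (real m) * C1f l (real m - 1)"
    using LRec[OF hl, of n] mn by simp
  then show "D2 l m = real m * (2 * real m - 1) * (2 * real m + l)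
                 / ((real m - 1 + l) * (2 * real m - 2 + l) * (2 * real m - 1 + 2 * l)) * D2 l (m - 1)
              + 2 * (real m - 1) * real m ^ 2 * (real m - 1 + l) * (real m + l) * (2 * real m - 1 + l)
                 * (2 * real m + l) / ((2 * l + 1) * (2 * real m - 1 + 2 * l))"
    using IR[OF hl y2, of "D2 l (m - 1)"] by simp
next
  fix m :: nat assume m: "m \<ge> 2"
  then obtain n where mn: "m = Suc (Suc n)" by (metis add_2_eq_Suc le_Suc_ex)
  have y2: "real m \<ge> 2" using m by simp
  have e: "m - 1 = Suc n" using mn by simp
  have "Dt2 l m = Rt l (real m) * Dt2 l (m - 1) - St l (real m) * Ct1f l (real m - 1)"
    using LRect[OF hl, of n] mn by simp
  then show "Dt2 l m = (real m - 1) * (2 * real m - 1) * (2 * real m - 1 + l)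
                 / ((real m - 1 + l) * (2 * real m - 3 + l) * (2 * real m - 3 + 2 * l)) * Dt2 l (m - 1)
              + (real m - 1) * (2 * real m - 1) * (2 * real m - 2 + l) * (2 * real m - 1 + l)
                 * (real m ^ 2 + (l - 2) * real m - l + 1 / 2) / (2 * (2 * l + 1))"
    using IRt[OF hl y2, of "Dt2 l (m - 1)"] by simp
next
  fix m :: nat assume m: "m \<ge> 1"
  then obtain n where mn: "m = Suc n" using not0_implies_Suc by fastforce
  show "D2 l m = 2 * (real m - 1) * real m * (real m + l) * (real m + l + 1) * (2 * real m + l)
                 * (real m ^ 2 + l * real m - 2 / (2 * l + 3)) / ((2 * l + 1) * (2 * l + 5))"
    using LD2[OF hl, of n] unfolding mn Ff_def by simp
next
  fix m :: nat assume m: "m \<ge> 1"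
  then obtain n where mn: "m = Suc n" using not0_implies_Suc by fastforce
  show "Dt2 l m = (real m - 1) * (2 * real m - 1) * (real m + l) * (2 * real m - 1 + l) * (2 * real m - 1 + 2 * l)
                 * (real m ^ 2 + (l - 1) * real m - (2 * l + 1) / 2 - 2 / (2 * l + 3))
                 / (2 * (2 * l + 1) * (2 * l + 5))"
    using LDt2[OF hl, of n] unfolding mn Ftf_def by simp
qed

end
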